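(* Fix $n$. Let $\mathbf X_1,\dots,\mathbf X_n\in\mathbb R^d$ be fixed covariates, $f_0$ a function, $\boldsymbol\epsilon\sim\mathcal N(\mathbf 0,\boldsymbol\Sigma)$ with $\lambda_{\min}(\boldsymbol\Sigma)\ge\Psi_{low}>0$, and $\mathbf Q$ symmetric positive definite with all eigenvalues of $\mathbf E=(\boldsymbol\Sigma^{1/2})^\top\mathbf Q\boldsymbol\Sigma^{1/2}$ at most $\Lambda_{high}$. For $f\in\mathcal F_n$ define the random variable $X_f=\frac1{\sqrt n}\boldsymbol\epsilon^\top\mathbf Q(\mathbf f-\mathbf f_0)$, where $\mathbf f=(f(\mathbf X_i))_i$, $\mathbf f_0=(f_0(\mathbf X_i))_i$. Then for all $f,g\in\mathcal F_n$, $$\|X_f-X_g\|_{\psi_2}\le C_\Lambda\|f-g\|_n,\qquad C_\Lambda=2(\sqrt2+1)^{1/2}\frac{\Lambda_{high}}{\sqrt{\Psi_{low}}}.$$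
   Context: $\|f\|_n^2=\frac1n\sum_if(\mathbf X_i)^2$; $\boldsymbol\Sigma^{1/2}(\boldsymbol\Sigma^{1/2})^\top=\boldsymbol\Sigma$. Orlicz norm: for $\psi_2(x)=e^{x^2}-1$, $\|X\|_{\psi_2}=\inf\{C>0:\mathbb E\,\psi_2(|X|/C)\le1\}$. $\mathcal F_n$ is the class $\{\alpha_0+\sum_{j=1}^{r_n}\alpha_j\sigma(\boldsymbol\gamma_j^\top\mathbf x+\gamma_{0,j}):\sum_{j=0}^{r_n}|\alpha_j|\le V_n,\ \max_j\sum_{i=0}^d|\gamma_{i,j}|\le M_n\}$ for a bounded Lipschitz activation $\sigma$ (any real-valued functions would do for the statement). *)

theory Defs
  imports "HOL-Probability.Probability"
begin

text \<open>Real eigenvalue of a square matrix.\<close>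
definition eigenvalue_of :: "real^'n^'n \<Rightarrow> real \<Rightarrow> bool" where
  "eigenvalue_of A lam \<longleftrightarrow> (\<exists>v. v \<noteq> 0 \<and> A *v v = lam *\<^sub>R v)"

definition symmetric_mat :: "real^'n^'n \<Rightarrow> bool" where
  "symmetric_mat A \<longleftrightarrow> transpose A = A"

definition pos_def_mat :: "real^'n^'n \<Rightarrow> bool" where
  "pos_def_mat A \<longleftrightarrow> (\<forall>x. x \<noteq> 0 \<longrightarrow> x \<bullet> (A *v x) > 0)"

text \<open>A random vector with law N(0, Sig): every non-trivial linear combination
  is a centred normal with variance a^T Sig a.\<close>
definition centered_gaussian_vector ::
  "'a measure \<Rightarrow> ('a \<Rightarrow> real^'n) \<Rightarrow> real^'n^'n \<Rightarrow> bool" where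
  "centered_gaussian_vector M eps Sig \<longleftrightarrow>
     eps \<in> borel_measurable M \<and>
     (\<forall>a. a \<noteq> 0 \<longrightarrow>
        distributed M lborel (\<lambda>w. a \<bullet> eps w) (normal_density 0 (sqrt (a \<bullet> (Sig *v a)))))"

definition psi2 :: "real \<Rightarrow> real" where
  "psi2 x = exp (x\<^sup>2) - 1"

text \<open>Orlicz psi_2 norm.\<close>
definition psi2_norm :: "'a measure \<Rightarrow> ('a \<Rightarrow> real) \<Rightarrow> real" where
  "psi2_norm M X = Inf {C. C > 0 \<and> (\<integral>\<^sup>+ w. ennreal (psi2 (\<bar>X w\<bar> / C)) \<partial>M) \<le> 1}"

text \<open>Empirical norm over the covariates X_1..X_n (indexed by the finite type 'n).\<close>
definition emp_norm :: "('n::finite \<Rightarrow> real^'d) \<Rightarrow> (real^'d \<Rightarrow> real) \<Rightarrow> real" where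
  "emp_norm Xs f = sqrt ((1 / real CARD('n)) * (\<Sum>i\<in>UNIV. (f (Xs i))\<^sup>2))"

definition eval_vec :: "('n::finite \<Rightarrow> real^'d) \<Rightarrow> (real^'d \<Rightarrow> real) \<Rightarrow> real^'n" where
  "eval_vec Xs f = (\<chi> i. f (Xs i))"

text \<open>The class F_n of one-hidden-layer networks; gamma j is the weight vector and
  gamma0 j the bias of hidden unit j (j = 1..r).\<close>
definition nn_class :: "(real \<Rightarrow> real) \<Rightarrow> nat \<Rightarrow> real \<Rightarrow> real \<Rightarrow> (real^'d \<Rightarrow> real) set" where
  "nn_class \<sigma> r V Mb =
    {(\<lambda>x. \<alpha> 0 + (\<Sum>j=1..r. \<alpha> j * \<sigma> (\<gamma> j \<bullet> x + \<gamma>0 j))) | \<alpha> \<gamma> \<gamma>0.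
       (\<Sum>j=0..r. \<bar>\<alpha> j\<bar>) \<le> V \<and>
       (\<forall>j\<in>{1..r}. \<bar>\<gamma>0 j\<bar> + (\<Sum>i\<in>UNIV. \<bar>\<gamma> j $ i\<bar>) \<le> Mb)}"

text \<open>The process X_f = n^{-1/2} eps^T Q (f - f0).\<close>
definition proc :: "('n::finite \<Rightarrow> real^'d) \<Rightarrow> real^'n^'n \<Rightarrow> (real^'d \<Rightarrow> real)
     \<Rightarrow> ('a \<Rightarrow> real^'n) \<Rightarrow> (real^'d \<Rightarrow> real) \<Rightarrow> 'a \<Rightarrow> real" where
  "proc Xs Q f0 eps f w =
     (1 / sqrt (real CARD('n))) * (eps w \<bullet> (Q *v (eval_vec Xs f - eval_vec Xs f0)))"

end

theory Submission
  imports Defs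
begin


lemma sym_dot: "symmetric_mat A \<Longrightarrow> x \<bullet> (A *v y) = (A *v x) \<bullet> y"
  unfolding symmetric_mat_def
  by (metis dot_lmul_matrix transpose_matrix_vector)

lemma eig_max:
  fixes A :: "real^'n^'n"
  assumes sym: "symmetric_mat A"
  shows "\<exists>v l. v \<noteq> 0 \<and> A *v v = l *\<^sub>R v \<and> (\<forall>x. x \<bullet> (A *v x) \<le> l * (x \<bullet> x))"
proof -
  let ?q = "\<lambda>x. x \<bullet> (A *v x)"
  have cont: "continuous_on (sphere 0 1) ?q"
    by (intro continuous_intros)
  have ne: "sphere (0::real^'n) 1 \<noteq> {}"
    by simp
  obtain v where v: "v \<in> sphere 0 1" and vmax: "\<And>y. y \<in> sphere 0 1 \<Longrightarrow> ?q y \<le> ?q v"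
    using continuous_attains_sup[OF compact_sphere ne cont] by blast
  define l where "l = ?q v"
  have nv: "norm v = 1" using v by simp
  have vv: "v \<bullet> v = 1" using nv by (simp add: dot_square_norm)
  have bound: "?q x \<le> l * (x \<bullet> x)" for x
  proof (cases "x = 0")
    case True then show ?thesis by simp
  next
    case False
    define nx where "nx = norm x"
    have nxp: "nx > 0" using False by (simp add: nx_def)
    let ?y = "(1 / nx) *\<^sub>R x"
    have "?y \<in> sphere 0 1" using False by (simp add: nx_def)
    hence "?q ?y \<le> l" using vmax l_def by blast
    moreover have "?q ?y = ?q x / nx^2"
      by (simp add: matrix_vector_mult_scaleR inner_scaleR_left inner_scaleR_right power2_eq_square)
    moreover have "x \<bullet> x = nx^2" by (simp add: dot_square_norm nx_def)
    ultimately have "?q x / nx^2 \<le> l" by simp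
    thus ?thesis using nxp \<open>x \<bullet> x = nx^2\<close> by (simp add: divide_le_eq mult.commute)
  qed
  define r where "r = A *v v - l *\<^sub>R v"
  define d where "d = ?q r - l * (r \<bullet> r)"
  have vr: "v \<bullet> (A *v r) = (A *v v) \<bullet> r" using sym_dot[OF sym] .
  have key: "2 * t * (r \<bullet> r) + t^2 * d \<le> 0" for t
  proof -
    define a where "a = (A *v v) \<bullet> r"
    define b where "b = v \<bullet> r"
    define c where "c = r \<bullet> r"
    define e where "e = ?q r"
    have "?q (v + t *\<^sub>R r) \<le> l * ((v + t *\<^sub>R r) \<bullet> (v + t *\<^sub>R r))" by (rule bound)
    moreover have "?q (v + t *\<^sub>R r) = l + t * (v \<bullet> (A *v r)) + t * (r \<bullet> (A *v v)) + t^2 * ?q r"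
      by (simp add: matrix_vector_right_distrib matrix_vector_mult_scaleR inner_add_left inner_add_right
           inner_scaleR_left inner_scaleR_right l_def power2_eq_square algebra_simps)
    moreover have "(v + t *\<^sub>R r) \<bullet> (v + t *\<^sub>R r) = 1 + 2 * t * (v \<bullet> r) + t^2 * (r \<bullet> r)"
      by (simp add: inner_add_left inner_add_right inner_scaleR_left inner_scaleR_right vv
          power2_eq_square inner_commute algebra_simps)
    ultimately have H: "l + 2*t*a + t^2*e \<le> l*(1 + 2*t*b + t^2*c)"
      using vr unfolding a_def b_def c_def e_def by (simp add: inner_commute)
    have ceq: "c = a - l * b"
      by (simp add: r_def inner_diff_left a_def b_def c_def inner_commute)
    have 1: "2*t*c = 2*t*a - 2*l*t*b" by (simp add: ceq algebra_simps)
    have 2: "l*(1 + 2*t*b + t^2*c) = l + 2*l*t*b + l*t^2*c" by (simp add: algebra_simps)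
    have 3: "t^2 * d = t^2*e - l*t^2*c" by (simp add: d_def e_def c_def algebra_simps)
    show ?thesis using H 1 2 3 unfolding c_def[symmetric] by linarith
  qed
  have "r \<bullet> r = 0"
  proof (rule ccontr)
    assume ne0: "r \<bullet> r \<noteq> 0"
    define c where "c = r \<bullet> r"
    have cpos: "c > 0" using ne0 c_def by simp
    define t where "t = c / (\<bar>d\<bar> + 1)"
    have tpos: "t > 0" using cpos by (simp add: t_def)
    have "t * (-(\<bar>d\<bar> + 1)) \<le> t * d" by (rule mult_left_mono) (use tpos in auto)
    hence "t * d \<ge> - t * (\<bar>d\<bar> + 1)" by (simp add: algebra_simps)
    hence td: "t * d \<ge> - c" using t_def by simp
    have "2 * t * c + t^2 * d = t * (2 * c + t * d)" by (simp add: power2_eq_square algebra_simps)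
    also have "\<dots> > 0" using tpos td cpos by simp
    finally show False using key[of t] c_def by simp
  qed
  hence "r = 0" by simp
  hence "A *v v = l *\<^sub>R v" by (simp add: r_def)
  moreover have "v \<noteq> 0" using nv by auto
  ultimately show ?thesis using bound by blast
qed

lemma neg_mv: "(- A) *v x = - (A *v (x::real^'n))"
  by (simp add: matrix_vector_mult_def vec_eq_iff sum_negf)

lemma sym_neg: "symmetric_mat A \<Longrightarrow> symmetric_mat (- (A::real^'n^'n))"
  unfolding symmetric_mat_def by (simp add: transpose_def vec_eq_iff)

lemma quad_upper:
  fixes A :: "real^'n^'n"
  assumes "symmetric_mat A" and "\<And>lam. eigenvalue_of A lam \<Longrightarrow> lam \<le> L"
  shows "x \<bullet> (A *v x) \<le> L * (x \<bullet> x)"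
proof -
  obtain v l where v: "v \<noteq> 0" "A *v v = l *\<^sub>R v" and b: "\<And>x. x \<bullet> (A *v x) \<le> l * (x \<bullet> x)"
    using eig_max[OF assms(1)] by blast
  have "l \<le> L" using assms(2) v unfolding eigenvalue_of_def by blast
  hence "l * (x \<bullet> x) \<le> L * (x \<bullet> x)" by (simp add: mult_right_mono)
  thus ?thesis using b[of x] by linarith
qed

lemma quad_lower:
  fixes A :: "real^'n^'n"
  assumes "symmetric_mat A" and "\<And>lam. eigenvalue_of A lam \<Longrightarrow> P \<le> lam"
  shows "P * (x \<bullet> x) \<le> x \<bullet> (A *v x)"
proof -
  obtain v l where v: "v \<noteq> 0" "(- A) *v v = l *\<^sub>R v" and b: "\<And>x. x \<bullet> ((- A) *v x) \<le> l * (x \<bullet> x)"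
    using eig_max[OF sym_neg[OF assms(1)]] by blast
  have "A *v v = - ((- A) *v v)" by (simp add: neg_mv)
  hence "A *v v = (- l) *\<^sub>R v" using v(2) by simp
  hence "P \<le> - l" using assms(2) v(1) unfolding eigenvalue_of_def by blast
  hence "P * (x \<bullet> x) \<le> (- l) * (x \<bullet> x)" by (intro mult_right_mono) auto
  thus ?thesis using b[of x] by (simp add: neg_mv)
qed

lemma cs_psd:
  fixes E :: "real^'n^'n"
  assumes sym: "symmetric_mat E" and psd: "\<And>x. 0 \<le> x \<bullet> (E *v x)"
  shows "(x \<bullet> (E *v y))^2 \<le> (x \<bullet> (E *v x)) * (y \<bullet> (E *v y))"
proof -
  define p where "p = x \<bullet> (E *v x)"
  define m where "m = x \<bullet> (E *v y)"
  define q where "q = y \<bullet> (E *v y)"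
  have ex: "0 \<le> p + 2*t*m + t^2*q" for t
  proof -
    have "0 \<le> (x + t *\<^sub>R y) \<bullet> (E *v (x + t *\<^sub>R y))" by (rule psd)
    also have "\<dots> = p + t * m + t * (y \<bullet> (E *v x)) + t^2 * q"
      by (simp add: matrix_vector_right_distrib matrix_vector_mult_scaleR inner_add_left inner_add_right
           inner_scaleR_left inner_scaleR_right p_def m_def q_def power2_eq_square algebra_simps)
    also have "y \<bullet> (E *v x) = m" unfolding m_def using sym_dot[OF sym, of y x] by (simp add: inner_commute)
    finally show ?thesis by (simp add: algebra_simps)
  qed
  have p0: "0 \<le> p" "0 \<le> q" using psd by (auto simp: p_def q_def)
  show ?thesis
  proof (cases "q = 0")
    case True
    have "m = 0"
    proof (rule ccontr)
      assume "m \<noteq> 0"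
      have "0 \<le> p + 2*(-(p+1)/(2*m))*m" using ex[of "-(p+1)/(2*m)"] True by simp
      also have "\<dots> = -1" using \<open>m \<noteq> 0\<close> by (simp add: field_simps)
      finally show False by simp
    qed
    thus ?thesis using p0 True by (simp add: m_def p_def q_def)
  next
    case False
    hence qp: "q > 0" using p0 by simp
    have "0 \<le> p + 2*(-m/q)*m + (-m/q)^2*q" by (rule ex)
    also have "\<dots> = p - m^2/q" using qp by (simp add: field_simps power2_eq_square)
    finally have "m^2/q \<le> p" by simp
    hence "m^2 \<le> p * q" using qp by (simp add: divide_le_eq)
    thus ?thesis by (simp add: m_def p_def q_def)
  qed
qed

lemma norm_bound:
  fixes E :: "real^'n^'n"
  assumes sym: "symmetric_mat E" and psd: "\<And>x. 0 \<le> x \<bullet> (E *v x)"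
    and up: "\<And>x. x \<bullet> (E *v x) \<le> L * (x \<bullet> x)"
  shows "(E *v z) \<bullet> (E *v z) \<le> L^2 * (z \<bullet> z)"
proof -
  define u where "u = E *v z"
  have "(u \<bullet> u)^2 = (u \<bullet> (E *v z))^2" by (simp add: u_def)
  also have "\<dots> \<le> (u \<bullet> (E *v u)) * (z \<bullet> (E *v z))" by (rule cs_psd[OF sym psd])
  also have "\<dots> \<le> (L * (u \<bullet> u)) * (L * (z \<bullet> z))"
    using psd[of u] up[of u] psd[of z] up[of z] by (intro mult_mono) auto
  finally have H: "(u \<bullet> u)^2 \<le> (L * (u \<bullet> u)) * (L * (z \<bullet> z))" .
  show ?thesis
  proof (cases "u \<bullet> u = 0")
    case True thus ?thesis by (simp add: u_def)
  next
    case False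
    hence "u \<bullet> u > 0" by simp
    hence "u \<bullet> u * (u \<bullet> u) \<le> u \<bullet> u * (L^2 * (z \<bullet> z))" using H
      by (simp add: power2_eq_square algebra_simps)
    hence "u \<bullet> u \<le> L^2 * (z \<bullet> z)" using \<open>u \<bullet> u > 0\<close> by simp
    thus ?thesis by (simp add: u_def)
  qed
qed



lemma nd_alt: "s > 0 \<Longrightarrow> normal_density 0 s y = 1 / (sqrt (2*pi) * s) * exp (- (y^2) / (2 * s^2))"
  by (simp add: normal_density_def real_sqrt_mult)

lemma gauss_psi2:
  assumes D: "distributed M lborel Y (\<lambda>y. ennreal (normal_density 0 s y))"
    and s: "s > 0" and C: "C > 0" and sc: "8 * s^2 \<le> 3 * C^2"
  shows "(\<integral>\<^sup>+ w. ennreal (psi2 (\<bar>Y w\<bar> / C)) \<partial>M) \<le> 1"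
proof -
  define Dd where "Dd = C^2 - 2 * s^2"
  have Dp: "Dd > 0" using sc s unfolding Dd_def by (smt (verit) zero_less_power)
  define s' where "s' = s * C / sqrt Dd"
  define k where "k = C / sqrt Dd"
  have s'p: "s' > 0" using s C Dp by (simp add: s'_def)
  have sqD: "(sqrt Dd)^2 = Dd" using Dp by simp
  have s'2: "s'^2 = s^2 * C^2 / Dd" by (simp add: s'_def power_mult_distrib power_divide sqD)
  have ident: "normal_density 0 s y * psi2 (\<bar>y\<bar> / C) = k * normal_density 0 s' y - normal_density 0 s y" for y
  proof -
    have e: "- (y^2) / (2 * s^2) + y^2 / C^2 = - (y^2) / (2 * s'^2)"
      using s C Dp unfolding s'2 Dd_def by (simp add: field_simps)
    have ee: "exp (- (y^2) / (2 * s^2)) * exp (y^2 / C^2) = exp (- (y^2) / (2 * s'^2))"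
      by (simp only: exp_add[symmetric] e)
    have "normal_density 0 s y * exp (y^2 / C^2) = 1 / (sqrt (2*pi) * s) * (exp (- (y^2) / (2 * s^2)) * exp (y^2 / C^2))"
      using s by (simp add: nd_alt)
    also have "\<dots> = k * (1 / (sqrt (2*pi) * s') * exp (- (y^2) / (2 * s'^2)))"
      unfolding ee using s C Dp by (simp add: k_def s'_def field_simps)
    also have "\<dots> = k * normal_density 0 s' y" using s'p by (simp add: nd_alt)
    finally show ?thesis unfolding psi2_def by (simp add: power_divide algebra_simps)
  qed
  have k2: "k \<le> 2"
  proof -
    have "C^2 \<le> 4 * Dd" using sc unfolding Dd_def by simp
    hence "C \<le> sqrt (4 * Dd)" by (rule real_le_rsqrt)
    hence "C \<le> 2 * sqrt Dd" using C by (simp add: real_sqrt_mult)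
    thus ?thesis using Dp by (simp add: k_def divide_le_eq)
  qed
  have "(\<integral>\<^sup>+ w. ennreal (psi2 (\<bar>Y w\<bar> / C)) \<partial>M)
      = (\<integral>\<^sup>+ y. ennreal (normal_density 0 s y) * ennreal (psi2 (\<bar>y\<bar> / C)) \<partial>lborel)"
    by (rule distributed_nn_integral[OF D, symmetric]) (simp add: psi2_def)
  also have "\<dots> = (\<integral>\<^sup>+ y. ennreal (k * normal_density 0 s' y - normal_density 0 s y) \<partial>lborel)"
  proof (rule nn_integral_cong)
    fix y
    have "psi2 (\<bar>y\<bar> / C) \<ge> 0" unfolding psi2_def by simp
    thus "ennreal (normal_density 0 s y) * ennreal (psi2 (\<bar>y\<bar> / C)) =
          ennreal (k * normal_density 0 s' y - normal_density 0 s y)"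
      by (simp add: ident[symmetric] ennreal_mult)
  qed
  also have "\<dots> = ennreal (\<integral> y. (k * normal_density 0 s' y - normal_density 0 s y) \<partial>lborel)"
  proof (rule nn_integral_eq_integral)
    show "integrable lborel (\<lambda>y. k * normal_density 0 s' y - normal_density 0 s y)"
      using s s'p by (intro Bochner_Integration.integrable_diff integrable_mult_right integrable_normal_density)
    show "AE y in lborel. 0 \<le> k * normal_density 0 s' y - normal_density 0 s y"
    proof (rule AE_I2)
      fix y
      have "0 \<le> normal_density 0 s y * psi2 (\<bar>y\<bar> / C)" unfolding psi2_def by simp
      thus "0 \<le> k * normal_density 0 s' y - normal_density 0 s y" by (simp only: ident)
    qed
  qed
  also have "(\<integral> y. (k * normal_density 0 s' y - normal_density 0 s y) \<partial>lborel) = k - 1"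
    using s s'p by (subst Bochner_Integration.integral_diff) (auto intro: integrable_mult_right integrable_normal_density simp: integral_normal_density)
  finally show ?thesis using k2 by (simp add: ennreal_le_1)
qed



lemma tdot: "x \<bullet> (transpose A *v y) = (A *v x) \<bullet> (y::real^'n)"
  by (metis dot_lmul_matrix transpose_matrix_vector transpose_transpose inner_commute)

theorem propositionS1:
  fixes M :: "'a measure"
    and eps :: "'a \<Rightarrow> real^'n::finite"
    and Xs :: "'n \<Rightarrow> real^'d::finite"
    and f0 :: "real^'d \<Rightarrow> real"
    and Sig Sroot Q :: "real^'n^'n"
    and \<sigma> :: "real \<Rightarrow> real"
    and r :: nat and V Mb :: real
    and Psi_low Lambda_high :: real
  assumes "prob_space M"
    and "centered_gaussian_vector M eps Sig"
    and "symmetric_mat Sig"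
    and "Psi_low > 0"
    and "\<And>lam. eigenvalue_of Sig lam \<Longrightarrow> Psi_low \<le> lam"
    and "Sroot ** transpose Sroot = Sig"
    and "symmetric_mat Q" and "pos_def_mat Q"
    and "\<And>lam. eigenvalue_of (transpose Sroot ** Q ** Sroot) lam \<Longrightarrow> lam \<le> Lambda_high"
    and "bounded (range \<sigma>)" and "\<exists>L. L-lipschitz_on UNIV \<sigma>"
    and "f \<in> nn_class \<sigma> r V Mb" and "g \<in> nn_class \<sigma> r V Mb"
  shows "psi2_norm M (\<lambda>w. proc Xs Q f0 eps f w - proc Xs Q f0 eps g w)
           \<le> 2 * sqrt (sqrt 2 + 1) * Lambda_high / sqrt Psi_low * emp_norm Xs (\<lambda>x. f x - g x)"
proof -
  note gv = assms(2)[unfolded centered_gaussian_vector_def]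
  define n where "n = real CARD('n)"
  have np: "n > 0" by (simp add: n_def)
  define h where "h = eval_vec Xs f - eval_vec Xs g"
  define S where "S = Sroot"
  define E where "E = transpose S ** Q ** S"
  define a where "a = (1 / sqrt n) *\<^sub>R (Q *v h)"
  have diff: "proc Xs Q f0 eps f w - proc Xs Q f0 eps g w = a \<bullet> eps w" for w
    unfolding proc_def a_def h_def n_def
    by (simp add: matrix_vector_mult_diff_distrib inner_diff_right inner_commute algebra_simps)
  have hh: "h \<bullet> h = (\<Sum>i\<in>UNIV. (f (Xs i) - g (Xs i))^2)"
    by (simp add: h_def inner_vec_def eval_vec_def power2_eq_square)
  have emp: "emp_norm Xs (\<lambda>x. f x - g x) = sqrt (h \<bullet> h / n)"
    unfolding emp_norm_def hh n_def by simp
  let ?R = "2 * sqrt (sqrt 2 + 1) * Lambda_high / sqrt Psi_low * emp_norm Xs (\<lambda>x. f x - g x)"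
  show ?thesis
  proof (cases "h = 0")
    case True
    have "{C. C > 0 \<and> (\<integral>\<^sup>+ w. ennreal (psi2 (\<bar>proc Xs Q f0 eps f w - proc Xs Q f0 eps g w\<bar> / C)) \<partial>M) \<le> 1}
          = {0<..}"
      using True by (auto simp: diff a_def psi2_def)
    hence "psi2_norm M (\<lambda>w. proc Xs Q f0 eps f w - proc Xs Q f0 eps g w) = 0"
      unfolding psi2_norm_def by simp
    moreover have "emp_norm Xs (\<lambda>x. f x - g x) = 0" using True emp by simp
    ultimately show ?thesis by simp
  next
    case False
    have "h \<bullet> (Q *v h) > 0" using assms(8) False unfolding pos_def_mat_def by blast
    hence Qh: "Q *v h \<noteq> 0" by auto
    hence a0: "a \<noteq> 0" using np by (simp add: a_def)
    define sd where "sd = sqrt (a \<bullet> (Sig *v a))"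
    have dist: "distributed M lborel (\<lambda>w. a \<bullet> eps w) (\<lambda>y. ennreal (normal_density 0 sd y))"
      using gv a0 unfolding sd_def by blast
    \<comment> \<open>invertibility\<close>
    have Sig_inj: "\<forall>x. Sig *v x = 0 \<longrightarrow> x = 0"
    proof (intro allI impI)
      fix x assume "Sig *v x = 0"
      show "x = 0"
      proof (rule ccontr)
        assume "x \<noteq> 0"
        hence "eigenvalue_of Sig 0" using \<open>Sig *v x = 0\<close> unfolding eigenvalue_of_def by auto
        thus False using assms(4,5) by force
      qed
    qed
    then obtain B where B: "B ** Sig = mat 1" using matrix_left_invertible_ker by blast
    hence B': "Sig ** B = mat 1" using matrix_left_right_inverse by blast
    hence SR: "S ** (transpose S ** B) = mat 1" using assms(6) by (simp add: S_def matrix_mul_assoc)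
    hence SL: "(transpose S ** B) ** S = mat 1" using matrix_left_right_inverse by blast
    have Sinj: "S *v x = 0 \<Longrightarrow> x = 0" for x
      by (metis SL matrix_vector_mul_assoc matrix_vector_mul_lid matrix_vector_mult_0_right)
    define z where "z = (transpose S ** B) *v h"
    have Sz: "S *v z = h" unfolding z_def by (simp add: matrix_vector_mul_assoc SR)
    have z0: "z \<noteq> 0" using Sz False by auto
    \<comment> \<open>properties of E\<close>
    have Esym: "symmetric_mat E"
      using assms(7) unfolding E_def symmetric_mat_def by (simp add: matrix_transpose_mul matrix_mul_assoc)
    have Eq: "x \<bullet> (E *v x) = (S *v x) \<bullet> (Q *v (S *v x))" for x
      unfolding E_def by (simp add: matrix_vector_mul_assoc[symmetric] tdot del: transpose_matrix_vector)
    have Epsd: "0 \<le> x \<bullet> (E *v x)" for x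
    proof (cases "S *v x = 0")
      case True thus ?thesis by (simp add: Eq)
    next
      case False thus ?thesis using assms(8) unfolding pos_def_mat_def Eq by (simp add: less_imp_le)
    qed
    have Eup: "x \<bullet> (E *v x) \<le> Lambda_high * (x \<bullet> x)" for x
      by (rule quad_upper[OF Esym]) (use assms(9) in \<open>simp add: E_def S_def\<close>)
    define u where "u = transpose S *v (Q *v h)"
    have uE: "u = E *v z" unfolding u_def E_def by (simp add: matrix_vector_mul_assoc[symmetric] Sz)
    have u1: "u \<bullet> u \<le> Lambda_high^2 * (z \<bullet> z)" unfolding uE by (rule norm_bound[OF Esym Epsd Eup])
    \<comment> \<open>S^T S\<close>
    have STSsym: "symmetric_mat (transpose S ** S)"
      unfolding symmetric_mat_def by (simp add: matrix_transpose_mul)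
    have STSlow: "Psi_low * (x \<bullet> x) \<le> x \<bullet> ((transpose S ** S) *v x)" for x
    proof (rule quad_lower[OF STSsym])
      fix mu assume "eigenvalue_of (transpose S ** S) mu"
      then obtain v where v: "v \<noteq> 0" "(transpose S ** S) *v v = mu *\<^sub>R v" unfolding eigenvalue_of_def by blast
      have "Sig *v (S *v v) = S *v ((transpose S ** S) *v v)"
        using assms(6) by (simp add: S_def matrix_vector_mul_assoc matrix_mul_assoc)
      also have "\<dots> = mu *\<^sub>R (S *v v)" by (simp add: v(2) matrix_vector_mult_scaleR)
      finally have "eigenvalue_of Sig mu" unfolding eigenvalue_of_def using Sinj v(1) by blast
      thus "Psi_low \<le> mu" by (rule assms(5))
    qed
    have "z \<bullet> ((transpose S ** S) *v z) = h \<bullet> h"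
      by (simp add: matrix_vector_mul_assoc[symmetric] tdot Sz del: transpose_matrix_vector)
    hence z1: "Psi_low * (z \<bullet> z) \<le> h \<bullet> h" using STSlow[of z] by simp
    \<comment> \<open>variance\<close>
    have var: "a \<bullet> (Sig *v a) = (u \<bullet> u) / n"
    proof -
      have "a \<bullet> (Sig *v a) = (transpose S *v a) \<bullet> (transpose S *v a)"
        by (simp add: S_def assms(6)[symmetric] matrix_vector_mul_assoc[symmetric] tdot[symmetric] del: transpose_matrix_vector)
      also have "transpose S *v a = (1 / sqrt n) *\<^sub>R u" by (simp add: a_def u_def matrix_vector_mult_scaleR)
      finally show ?thesis using np by (simp add: power2_eq_square)
    qed
    have "a \<bullet> (Sig *v a) \<ge> Psi_low * (a \<bullet> a)" by (rule quad_lower[OF assms(3) assms(5)])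
    moreover have "a \<bullet> a > 0" using a0 by simp
    ultimately have varp: "a \<bullet> (Sig *v a) > 0" using assms(4) by (smt (verit) mult_pos_pos)
    hence sdp: "sd > 0" by (simp add: sd_def)
    have up: "u \<bullet> u > 0" using varp var np by (simp add: zero_less_divide_iff)
    have Lnn: "Lambda_high \<ge> 0"
    proof -
      have "0 < z \<bullet> z" using z0 by simp
      moreover have "0 \<le> Lambda_high * (z \<bullet> z)" using Epsd[of z] Eup[of z] by linarith
      ultimately show ?thesis by (metis zero_le_mult_iff not_le)
    qed
    have Lp: "Lambda_high > 0"
    proof (rule ccontr)
      assume "\<not> Lambda_high > 0" hence "Lambda_high = 0" using Lnn by simp
      thus False using u1 up by simp
    qed
    have ub: "u \<bullet> u * Psi_low \<le> Lambda_high^2 * (h \<bullet> h)"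
    proof -
      have "u \<bullet> u * Psi_low \<le> Lambda_high^2 * (z \<bullet> z) * Psi_low"
        using u1 assms(4) by (simp add: mult_right_mono)
      also have "\<dots> = Lambda_high^2 * (Psi_low * (z \<bullet> z))" by simp
      also have "\<dots> \<le> Lambda_high^2 * (h \<bullet> h)" using z1 by (intro mult_left_mono) auto
      finally show ?thesis .
    qed
    have hp: "h \<bullet> h > 0" using False by simp
    have "sqrt 2 + 1 > (0::real)" by (smt (verit) real_sqrt_ge_zero)
    hence Rp: "?R > 0" unfolding emp using Lp assms(4) np hp
      by (intro mult_pos_pos divide_pos_pos) auto
    have R2: "?R^2 = 4 * (sqrt 2 + 1) * Lambda_high^2 / Psi_low * (h \<bullet> h / n)"
      unfolding emp using assms(4) np hp
      by (simp add: power_mult_distrib power_divide)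
    have sd2: "sd^2 = u \<bullet> u / n" using varp var by (simp add: sd_def)
    have "8 * sd^2 \<le> 3 * ?R^2"
    proof -
      have s2: "sqrt 2 \<ge> 1" by simp
      have "8 * sd^2 = 8 * (u \<bullet> u * Psi_low) / (Psi_low * n)" using sd2 assms(4) by simp
      also have "\<dots> \<le> 8 * (Lambda_high^2 * (h \<bullet> h)) / (Psi_low * n)"
        using ub assms(4) np by (intro divide_right_mono) auto
      also have "\<dots> \<le> 12 * (sqrt 2 + 1) * (Lambda_high^2 * (h \<bullet> h)) / (Psi_low * n)"
        using assms(4) np s2 hp by (intro divide_right_mono mult_right_mono) auto
      also have "\<dots> = 3 * ?R^2" unfolding R2 by simp
      finally show ?thesis .
    qed
    hence inset: "(\<integral>\<^sup>+ w. ennreal (psi2 (\<bar>a \<bullet> eps w\<bar> / ?R)) \<partial>M) \<le> 1"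
      using gauss_psi2[OF dist sdp Rp] by blast
    show ?thesis unfolding psi2_norm_def diff
    proof (rule cInf_lower)
      show "?R \<in> {C. C > 0 \<and> (\<integral>\<^sup>+ w. ennreal (psi2 (\<bar>a \<bullet> eps w\<bar> / C)) \<partial>M) \<le> 1}"
        using Rp inset by simp
      show "bdd_below {C. C > 0 \<and> (\<integral>\<^sup>+ w. ennreal (psi2 (\<bar>a \<bullet> eps w\<bar> / C)) \<partial>M) \<le> 1}"
        by (rule bdd_belowI[of _ 0]) auto
    qed
  qed
qed

end
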